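(* In the sequential two-level memory model with a fast memory of size $M$, any classical Cholesky decomposition algorithm for $n{\times}n$ matrices has bandwidth cost $\Omega(n^3/M^{1/2})$ and latency cost $\Omega(n^3/M^{3/2})$.
   Context: The Cholesky decomposition of a real symmetric positive definite matrix $A$ is $A = LL^T$ with $L$ lower triangular; its entries satisfy $L(i,i)=\sqrt{A(i,i)-\sum_{k=1}^{i-1}L(i,k)^2}$ and $L(i,j)=\frac{1}{L(j,j)}\big(A(i,j)-\sum_{k=1}^{j-1}L(i,k)L(j,k)\big)$ for $i>j$. A "classical" Cholesky algorithm performs exactly these arithmetic operations, possibly reordered using only associativity and commutativity of addition (no pivoting, no distributivity). Sequential two-level memory model: a fast memory holding $M$ words and an unbounded slow memory; the matrix initially resides in slow memory and is too large to fit in fast memory ($M<n^2$). Words contiguous in slow memory can be read or written together as one message, of at most $M$ words. Bandwidth cost is the total number of words transferred between fast and slow memory; latency cost is the total number of messages. *)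

theory Defs
  imports Complex_Main "HOL-Library.Multiset"
begin

text \<open>Indices are 0-based: the matrix is indexed by 0..n-1. Inp i j (with j \<le> i)
  is the formal input entry A(i,j) = A(j,i).\<close>

datatype expr = Inp nat nat | Add expr expr | Sub expr expr | Mul expr expr
  | Div expr expr | Sqrt expr

text \<open>sum_tree e P N: the expression e is a tree of additions/subtractions whose
  value is (sum of P) minus (sum of N), the leaves being the summands. This captures
  reordering of a sum using only associativity and commutativity of addition.\<close>

inductive sum_tree :: "expr \<Rightarrow> expr multiset \<Rightarrow> expr multiset \<Rightarrow> bool" where
  leaf: "sum_tree e {#e#} {#}"
| add: "sum_tree e1 P1 N1 \<Longrightarrow> sum_tree e2 P2 N2 \<Longrightarrow>
          sum_tree (Add e1 e2) (P1 + P2) (N1 + N2)"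
| sub: "sum_tree e1 P1 N1 \<Longrightarrow> sum_tree e2 P2 N2 \<Longrightarrow>
          sum_tree (Sub e1 e2) (P1 + N2) (N1 + P2)"

text \<open>chol_entry i j e: e is a classical way of computing L(i,j) (j \<le> i):
  L(i,i) = sqrt(A(i,i) - sum_{k<i} L(i,k)^2),
  L(i,j) = (A(i,j) - sum_{k<j} L(i,k) L(j,k)) / L(j,j),
  where the sum may be reassociated/reordered arbitrarily.\<close>

inductive chol_entry :: "nat \<Rightarrow> nat \<Rightarrow> expr \<Rightarrow> bool" where
  diag: "\<lbrakk> length ps = i;
           \<forall>k<i. \<exists>x y. ps ! k = Mul x y \<and> chol_entry i k x \<and> chol_entry i k y;
           sum_tree s {#Inp i i#} (mset ps) \<rbrakk>
         \<Longrightarrow> chol_entry i i (Sqrt s)"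
| offdiag: "\<lbrakk> j < i; length ps = j;
           \<forall>k<j. \<exists>x y. (ps ! k = Mul x y \<or> ps ! k = Mul y x)
                     \<and> chol_entry i k x \<and> chol_entry j k y;
           sum_tree s {#Inp i j#} (mset ps);
           chol_entry j j d \<rbrakk>
         \<Longrightarrow> chol_entry i j (Div s d)"

datatype aop = OAdd | OSub | OMul | ODiv | OSqrt

text \<open>Load a ds: one message reading the contiguous slow words a, a+1, ..., a+|ds|-1
  into fast slots ds. Store a ss: one message writing fast slots ss to the contiguous
  slow words a, ..., a+|ss|-1. Arith op d args: arithmetic in fast memory.\<close>

datatype instr = Load nat "nat list" | Store nat "nat list" | Arith aop nat "nat list"

type_synonym mem = "nat \<Rightarrow> expr option"
type_synonym state = "mem \<times> mem"  \<comment> \<open>(fast memory, slow memory)\<close>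

fun apply_op :: "aop \<Rightarrow> expr list \<Rightarrow> expr option" where
  "apply_op OAdd [a, b] = Some (Add a b)"
| "apply_op OSub [a, b] = Some (Sub a b)"
| "apply_op OMul [a, b] = Some (Mul a b)"
| "apply_op ODiv [a, b] = Some (Div a b)"
| "apply_op OSqrt [a] = Some (Sqrt a)"
| "apply_op _ _ = None"

fun wf_instr :: "nat \<Rightarrow> instr \<Rightarrow> bool" where
  "wf_instr M (Load a ds) = (ds \<noteq> [] \<and> length ds \<le> M \<and> distinct ds \<and> (\<forall>d\<in>set ds. d < M))"
| "wf_instr M (Store a ss) = (ss \<noteq> [] \<and> length ss \<le> M \<and> (\<forall>s\<in>set ss. s < M))"
| "wf_instr M (Arith op d args) = (d < M \<and> (\<forall>x\<in>set args. x < M))"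

fun exec :: "instr \<Rightarrow> state \<Rightarrow> state" where
  "exec (Load a ds) (F, S) =
     (fold (\<lambda>k F'. F'(ds ! k := S (a + k))) [0..<length ds] F, S)"
| "exec (Store a ss) (F, S) =
     (F, fold (\<lambda>k S'. S'(a + k := F (ss ! k))) [0..<length ss] S)"
| "exec (Arith op d args) (F, S) =
     (F(d := (if (\<forall>x\<in>set args. F x \<noteq> None)
              then apply_op op (map (the \<circ> F) args) else None)), S)"

definition run :: "instr list \<Rightarrow> state \<Rightarrow> state" where
  "run prog st = fold exec prog st"

fun msg_words :: "instr \<Rightarrow> nat" where
  "msg_words (Load a ds) = length ds"
| "msg_words (Store a ss) = length ss"
| "msg_words (Arith op d args) = 0"

fun is_msg :: "instr \<Rightarrow> bool" where
  "is_msg (Arith op d args) = False"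
| "is_msg _ = True"

definition bandwidth :: "instr list \<Rightarrow> nat" where
  "bandwidth prog = sum_list (map msg_words prog)"

definition latency :: "instr list \<Rightarrow> nat" where
  "latency prog = length (filter is_msg prog)"

text \<open>Initial state: fast memory empty; the symmetric n x n matrix A is stored in slow
  memory, entry (i,j) at address pos i j (an arbitrary injective layout).\<close>

definition init_state :: "nat \<Rightarrow> (nat \<Rightarrow> nat \<Rightarrow> nat) \<Rightarrow> state" where
  "init_state n pos =
     (\<lambda>_. None,
      \<lambda>q. if \<exists>i<n. \<exists>j<n. pos i j = q
           then (case SOME ij. fst ij < n \<and> snd ij < n \<and> pos (fst ij) (snd ij) = q of
                   (i, j) \<Rightarrow> Some (Inp (max i j) (min i j)))
           else None)"

definition valid_layout :: "nat \<Rightarrow> (nat \<Rightarrow> nat \<Rightarrow> nat) \<Rightarrow> bool" where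
  "valid_layout n pos = inj_on (\<lambda>(i, j). pos i j) ({..<n} \<times> {..<n})"

definition classical_cholesky :: "nat \<Rightarrow> nat \<Rightarrow> (nat \<Rightarrow> nat \<Rightarrow> nat) \<Rightarrow> instr list \<Rightarrow> bool" where
  "classical_cholesky n M pos prog \<longleftrightarrow>
     (\<forall>ins\<in>set prog. wf_instr M ins) \<and>
     (\<forall>i<n. \<forall>j\<le>i. \<exists>q e. snd (run prog (init_state n pos)) q = Some e \<and> chol_entry i j e)"

end

theory Submission
  imports Defs
begin


fun spine :: "expr \<Rightarrow> (nat \<times> nat) set" where
  "spine (Inp i j) = {(i,j)}"
| "spine (Add a b) = spine a \<union> spine b"
| "spine (Sub a b) = spine a \<union> spine b"
| "spine (Mul a b) = {}"
| "spine (Div a b) = spine a"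
| "spine (Sqrt a) = spine a"

fun sch :: "expr \<Rightarrow> expr set" where
  "sch (Inp i j) = {}"
| "sch (Add a b) = {a, b}"
| "sch (Sub a b) = {a, b}"
| "sch (Mul a b) = {}"
| "sch (Div a b) = {a}"
| "sch (Sqrt a) = {a}"

fun mk :: "expr \<Rightarrow> (nat \<times> nat) set" where
  "mk (Inp i j) = {}"
| "mk (Add a b) = mk a \<union> mk b"
| "mk (Sub a b) = mk a \<union> mk b"
| "mk (Mul a b) = {(max (fst p) (fst q), min (fst p) (fst q)) | p q. p \<in> spine a \<and> q \<in> spine b}"
| "mk (Div a b) = mk a"
| "mk (Sqrt a) = mk a"

inductive ssub :: "expr \<Rightarrow> expr \<Rightarrow> bool" where
  refl: "ssub e e"
| step: "c \<in> sch e \<Longrightarrow> ssub z c \<Longrightarrow> ssub z e"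

lemma ssub_trans0: "ssub b c \<Longrightarrow> ssub a b \<Longrightarrow> ssub a c"
  by (induction rule: ssub.induct) (auto intro: ssub.step)

lemma ssub_trans: "ssub a b \<Longrightarrow> ssub b c \<Longrightarrow> ssub a c"
  using ssub_trans0 by blast

lemma ssub_child: "c \<in> sch r \<Longrightarrow> ssub r X \<Longrightarrow> ssub c X"
  by (meson ssub.refl ssub.step ssub_trans)

lemma spine_sch: "spine c \<subseteq> spine e" if "c \<in> sch e"
  using that by (cases e) auto

lemma mk_sch: "mk c \<subseteq> mk e" if "c \<in> sch e"
  using that by (cases e) auto

lemma ssub_spine: "ssub z e \<Longrightarrow> spine z \<subseteq> spine e"
  by (induction rule: ssub.induct) (use spine_sch in blast)+

lemma ssub_mk: "ssub z e \<Longrightarrow> mk z \<subseteq> mk e"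
  by (induction rule: ssub.induct) (use mk_sch in blast)+

lemma spine_nonInp: "(\<And>i j. r \<noteq> Inp i j) \<Longrightarrow> spine r = \<Union> (spine ` sch r)"
  by (cases r) auto

lemma ssub_Inp: "ssub z (Inp i j) \<Longrightarrow> z = Inp i j"
  by (induction z "Inp i j" rule: ssub.induct) auto

lemma ssub_proper: "ssub m r \<Longrightarrow> m \<noteq> r \<Longrightarrow> \<exists>c\<in>sch r. ssub m c"
  by (induction rule: ssub.induct) auto

lemma apply_op_sch: "apply_op op vs = Some r \<Longrightarrow> sch r \<subseteq> set vs \<and> (\<forall>i j. r \<noteq> Inp i j)"
  by (induction op vs rule: apply_op.induct) auto

lemma sum_tree_props:
  "sum_tree s P N \<Longrightarrow> spine s = \<Union> (spine ` set_mset (P + N)) \<and>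
     mk s = \<Union> (mk ` set_mset (P + N)) \<and> (\<forall>e\<in>#P+N. ssub e s)"
proof (induction rule: sum_tree.induct)
  case (leaf e) then show ?case by (auto intro: ssub.refl)
next
  case (add e1 P1 N1 e2 P2 N2)
  then show ?case by (auto intro: ssub.step)
next
  case (sub e1 P1 N1 e2 P2 N2)
  then show ?case by (auto intro: ssub.step)
qed

lemma chol_spine: "chol_entry i k x \<Longrightarrow> spine x = {(i,k)}"
proof (induction rule: chol_entry.induct)
  case (diag ps i s)
  have "\<forall>e\<in>set ps. spine e = {}"
    using diag.IH diag.hyps(1) by (metis in_set_conv_nth spine.simps(4))
  then show ?case using sum_tree_props[OF diag.hyps(2)] by auto
next
  case (offdiag j i ps s d)
  have "\<forall>e\<in>set ps. spine e = {}"
    using offdiag.IH offdiag.hyps(2) by (metis in_set_conv_nth spine.simps(4))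
  then show ?case using sum_tree_props[OF offdiag.hyps(3)] by auto
qed

lemma chol_mk: "chol_entry i j x \<Longrightarrow> mk x \<subseteq> {(i,j)}"
proof (induction rule: chol_entry.induct)
  case (diag ps i s)
  have "\<forall>e\<in>set ps. mk e \<subseteq> {(i,i)}"
  proof
    fix e assume "e \<in> set ps"
    then obtain k where k: "k < i" "ps ! k = e" by (metis diag.hyps(1) in_set_conv_nth)
    then obtain x y where "e = Mul x y" "chol_entry i k x" "chol_entry i k y"
      using diag.IH k by blast
    then show "mk e \<subseteq> {(i,i)}" using chol_spine by auto
  qed
  then show ?case using sum_tree_props[OF diag.hyps(2)] by auto
next
  case (offdiag j i ps s d)
  have "\<forall>e\<in>set ps. mk e \<subseteq> {(i,j)}"
  proof
    fix e assume "e \<in> set ps"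
    then obtain k where k: "k < j" "ps ! k = e" by (metis offdiag.hyps(2) in_set_conv_nth)
    then obtain x y where "e = Mul x y \<or> e = Mul y x" "chol_entry i k x" "chol_entry j k y"
      using offdiag.IH k by blast
    then show "mk e \<subseteq> {(i,j)}" using chol_spine offdiag.hyps(1) by auto
  qed
  then show ?case using sum_tree_props[OF offdiag.hyps(3)] by auto
qed

lemma chol_not_Inp: "chol_entry i j x \<Longrightarrow> x \<noteq> Inp a b"
  by (cases rule: chol_entry.cases) auto

lemma chol_mul:
  assumes "chol_entry i j X" "k < j"
  shows "\<exists>a b. ssub (Mul a b) X \<and> mk (Mul a b) = {(i,j)} \<and>
           ((spine a = {(i,k)} \<and> spine b = {(j,k)}) \<or> (spine a = {(j,k)} \<and> spine b = {(i,k)}))"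
  using assms
proof (cases rule: chol_entry.cases)
  case (diag ps s)
  then obtain x y where xy: "ps ! k = Mul x y" "chol_entry i k x" "chol_entry i k y"
    using assms(2) by blast
  have "k < length ps" using diag assms(2) by simp
  then have "ps ! k \<in> set ps" by (rule nth_mem)
  then have "Mul x y \<in># mset ps" using xy(1) by simp
  then have "ssub (Mul x y) s" using sum_tree_props[OF diag(5)] by auto
  then have "ssub (Mul x y) X" using diag by (auto intro: ssub.step)
  then show ?thesis using xy chol_spine diag by (intro exI[of _ x] exI[of _ y]) auto
next
  case (offdiag ps s d)
  then obtain x y where xy: "ps ! k = Mul x y \<or> ps ! k = Mul y x" "chol_entry i k x" "chol_entry j k y"
    using assms(2) by blast
  have "k < length ps" using offdiag assms(2) by simp
  then have "ps ! k \<in> set ps" by (rule nth_mem)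
  then have "ps ! k \<in># mset ps" by simp
  then have "ssub (ps ! k) X" using sum_tree_props[OF offdiag(5)] offdiag by (auto intro: ssub.step)
  have sx: "spine x = {(i,k)}" "spine y = {(j,k)}" using xy chol_spine by auto
  have ji: "j < i" using offdiag by simp
  show ?thesis
  proof (cases "ps ! k = Mul x y")
    case True
    have "mk (Mul x y) = {(i,j)}" using sx ji by auto
    then show ?thesis using True sx \<open>ssub (ps ! k) X\<close> by metis
  next
    case False
    then have "ps ! k = Mul y x" using xy by blast
    moreover have "mk (Mul y x) = {(i,j)}" using sx ji by auto
    ultimately show ?thesis using sx \<open>ssub (ps ! k) X\<close> by metis
  qed
qed


lemma fold_upd_in:
  "fold (\<lambda>k F'. F'(g k := h k)) xs F q \<in> insert (F q) (h ` set xs)"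
proof (induction xs arbitrary: F)
  case Nil then show ?case by simp
next
  case (Cons x xs)
  define v where "v = fold (\<lambda>k F'. F'(g k := h k)) (x # xs) F q"
  have "v \<in> insert ((F(g x := h x)) q) (h ` set xs)"
    unfolding v_def fold_Cons comp_apply by (rule Cons.IH)
  moreover have "(F(g x := h x)) q \<in> {F q, h x}" by simp
  ultimately have "v \<in> insert (F q) (h ` set (x # xs))" by auto
  then show ?case unfolding v_def .
qed

lemma apply_op_Mul: "apply_op op vs = Some (Mul a b) \<Longrightarrow> vs = [a, b]"
  by (induction op vs rule: apply_op.induct) auto

locale cc =
  fixes n M :: nat and pos :: "nat \<Rightarrow> nat \<Rightarrow> nat" and prog :: "instr list"
  assumes wf: "\<forall>ins\<in>set prog. wf_instr M ins"
begin

definition st :: "nat \<Rightarrow> state" where "st t = run (take t prog) (init_state n pos)"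

abbreviation "L \<equiv> length prog"

lemma st_Suc: "t < L \<Longrightarrow> st (Suc t) = exec (prog ! t) (st t)"
  by (simp add: st_def run_def take_Suc_conv_app_nth)

lemma st_L: "st L = run prog (init_state n pos)"
  by (simp add: st_def)

lemma st_0: "st 0 = init_state n pos"
  by (simp add: st_def run_def)

definition fvals :: "nat \<Rightarrow> expr set" where "fvals t = {v. \<exists>q. fst (st t) q = Some v}"
definition svals :: "nat \<Rightarrow> expr set" where "svals t = {v. \<exists>q. snd (st t) q = Some v}"

definition LV :: "nat \<Rightarrow> expr set" where
  "LV s = (case prog ! s of Load a ds \<Rightarrow> {v. \<exists>k<length ds. snd (st s) (a + k) = Some v} | _ \<Rightarrow> {})"
definition SV :: "nat \<Rightarrow> expr set" where
  "SV s = (case prog ! s of Store a ss \<Rightarrow> {v. \<exists>k<length ss. fst (st s) (ss ! k) = Some v} | _ \<Rightarrow> {})"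

lemma LV_sub: "LV s \<subseteq> svals s"
  by (auto simp: LV_def svals_def split: instr.splits)

lemma SV_sub: "SV s \<subseteq> fvals s"
  by (auto simp: SV_def fvals_def split: instr.splits)

lemma fvals_step:
  assumes "t < L" "v \<in> fvals (Suc t)"
  shows "v \<in> fvals t \<or> v \<in> LV t \<or> (\<exists>op vs. apply_op op vs = Some v \<and> set vs \<subseteq> fvals t)"
proof -
  obtain F S where FS: "st t = (F, S)" by fastforce
  obtain q where q: "fst (st (Suc t)) q = Some v" using assms(2) by (auto simp: fvals_def)
  show ?thesis
  proof (cases "prog ! t")
    case (Load a ds)
    have "fst (st (Suc t)) q = fold (\<lambda>k F'. F'(ds ! k := S (a + k))) [0..<length ds] F q"
      using st_Suc[OF assms(1)] FS Load by simp
    then have "Some v \<in> insert (F q) ((\<lambda>k. S (a + k)) ` set [0..<length ds])"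
      using q fold_upd_in[of "\<lambda>k. ds ! k" "\<lambda>k. S (a + k)" "[0..<length ds]" F q] by simp
    then show ?thesis using FS Load by (auto simp: fvals_def LV_def)
  next
    case (Store a ss)
    then show ?thesis using st_Suc[OF assms(1)] FS q by (auto simp: fvals_def)
  next
    case (Arith op d args)
    have e: "fst (st (Suc t)) = F(d := (if (\<forall>x\<in>set args. F x \<noteq> None)
              then apply_op op (map (the \<circ> F) args) else None))"
      using st_Suc[OF assms(1)] FS Arith by simp
    show ?thesis
    proof (cases "q = d")
      case True
      then have "(\<forall>x\<in>set args. F x \<noteq> None)" "apply_op op (map (the \<circ> F) args) = Some v"
        using q e by (auto split: if_splits)
      moreover have "set (map (the \<circ> F) args) \<subseteq> fvals t"
        using calculation(1) FS by (auto simp: fvals_def)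
      ultimately show ?thesis by blast
    next
      case False
      then show ?thesis using q e FS by (auto simp: fvals_def)
    qed
  qed
qed

lemma svals_step:
  assumes "t < L" "v \<in> svals (Suc t)"
  shows "v \<in> svals t \<or> v \<in> SV t"
proof -
  obtain F S where FS: "st t = (F, S)" by fastforce
  obtain q where q: "snd (st (Suc t)) q = Some v" using assms(2) by (auto simp: svals_def)
  show ?thesis
  proof (cases "prog ! t")
    case (Store a ss)
    have "snd (st (Suc t)) q = fold (\<lambda>k S'. S'(a + k := F (ss ! k))) [0..<length ss] S q"
      using st_Suc[OF assms(1)] FS Store by simp
    then have "Some v \<in> insert (S q) ((\<lambda>k. F (ss ! k)) ` set [0..<length ss])"
      using q fold_upd_in[of "\<lambda>k. a + k" "\<lambda>k. F (ss ! k)" "[0..<length ss]" S q] by simp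
    then show ?thesis using FS Store by (auto simp: svals_def SV_def)
  next
    case (Load a ds)
    then show ?thesis using st_Suc[OF assms(1)] FS q by (auto simp: svals_def)
  next
    case (Arith op d args)
    then show ?thesis using st_Suc[OF assms(1)] FS q by (auto simp: svals_def)
  qed
qed

lemma fast_bound: "t \<le> L \<Longrightarrow> M \<le> q \<Longrightarrow> fst (st t) q = None"
proof (induction t)
  case 0 then show ?case by (simp add: st_0 init_state_def)
next
  case (Suc t)
  then have tL: "t < L" by simp
  have wi: "wf_instr M (prog ! t)" using wf tL by simp
  obtain F S where FS: "st t = (F, S)" by fastforce
  have F: "F q = None" using Suc FS by simp
  show ?case
  proof (cases "prog ! t")
    case (Load a ds)
    have "fst (st (Suc t)) q = fold (\<lambda>k F'. F'(ds ! k := S (a + k))) [0..<length ds] F q"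
      using st_Suc[OF tL] FS Load by simp
    also have "\<dots> = F q"
    proof -
      have "\<And>xs G. (\<forall>k\<in>set xs. ds ! k \<noteq> q) \<Longrightarrow> fold (\<lambda>k F'. F'(ds ! k := S (a + k))) xs G q = G q"
      proof -
        fix xs G show "(\<forall>k\<in>set xs. ds ! k \<noteq> q) \<Longrightarrow> fold (\<lambda>k F'. F'(ds ! k := S (a + k))) xs G q = G q"
          by (induction xs arbitrary: G) auto
      qed
      moreover have "\<forall>k\<in>set [0..<length ds]. ds ! k \<noteq> q"
      proof
        fix k assume "k \<in> set [0..<length ds]"
        then have "ds ! k \<in> set ds" by simp
        then have "ds ! k < M" using wi Load by simp
        then show "ds ! k \<noteq> q" using Suc.prems(2) by simp
      qed
      ultimately show ?thesis by blast
    qed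
    finally show ?thesis using F by simp
  next
    case (Store a ss)
    then show ?thesis using st_Suc[OF tL] FS F by simp
  next
    case (Arith op d args)
    then have "d \<noteq> q" using wi Suc.prems(2) by auto
    then show ?thesis using st_Suc[OF tL] FS F Arith by simp
  qed
qed

lemma fvals_card: "t \<le> L \<Longrightarrow> finite (fvals t) \<and> card (fvals t) \<le> M"
proof -
  assume t: "t \<le> L"
  have "fvals t \<subseteq> (\<lambda>q. the (fst (st t) q)) ` {..<M}"
  proof
    fix v assume "v \<in> fvals t"
    then obtain q where q: "fst (st t) q = Some v" by (auto simp: fvals_def)
    then have "q < M" using fast_bound[OF t] by (metis not_le option.distinct(1))
    then show "v \<in> (\<lambda>q. the (fst (st t) q)) ` {..<M}" using q by force
  qed
  note sub = this
  have fin: "finite ((\<lambda>q. the (fst (st t) q)) ` {..<M})" by simp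
  have "card (fvals t) \<le> card ((\<lambda>q. the (fst (st t) q)) ` {..<M})" by (rule card_mono[OF fin sub])
  also have "\<dots> \<le> M" using card_image_le[of "{..<M}" "\<lambda>q. the (fst (st t) q)"] by simp
  finally show ?thesis using finite_subset[OF sub fin] by simp
qed

lemma LV_card: "finite (LV s) \<and> card (LV s) \<le> msg_words (prog ! s)"
proof (cases "prog ! s")
  case (Load a ds)
  let ?I = "(\<lambda>k. the (snd (st s) (a + k))) ` {..<length ds}"
  have sub: "LV s \<subseteq> ?I"
    using Load by (force simp: LV_def)
  have fin: "finite ?I" by simp
  have "card (LV s) \<le> card ?I" by (rule card_mono[OF fin sub])
  also have "\<dots> \<le> length ds" using card_image_le[of "{..<length ds}" "\<lambda>k. the (snd (st s) (a + k))"] by simp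
  finally show ?thesis using finite_subset[OF sub fin] Load by simp
qed (auto simp: LV_def)

lemma SV_card: "finite (SV s) \<and> card (SV s) \<le> msg_words (prog ! s)"
proof (cases "prog ! s")
  case (Store a ss)
  let ?I = "(\<lambda>k. the (fst (st s) (ss ! k))) ` {..<length ss}"
  have sub: "SV s \<subseteq> ?I"
    using Store by (force simp: SV_def)
  have fin: "finite ?I" by simp
  have "card (SV s) \<le> card ?I" by (rule card_mono[OF fin sub])
  also have "\<dots> \<le> length ss" using card_image_le[of "{..<length ss}" "\<lambda>k. the (fst (st s) (ss ! k))"] by simp
  finally show ?thesis using finite_subset[OF sub fin] Store by simp
qed (auto simp: SV_def)

end


context cc begin

lemma prov_A:
  "b \<le> t \<Longrightarrow> t \<le> L \<Longrightarrow> \<forall>v p. v \<in> fvals t \<longrightarrow> p \<in> spine v \<longrightarrow>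
     (\<exists>z. ssub z v \<and> p \<in> spine z \<and> z \<in> fvals b \<union> (\<Union>s\<in>{b..<t}. LV s))"
proof (induction t)
  case 0 then show ?case by (auto intro: ssub.refl)
next
  case (Suc t)
  show ?case
  proof (cases "b = Suc t")
    case True then show ?thesis by (auto intro: ssub.refl)
  next
    case False
    then have bt: "b \<le> t" and tL: "t < L" using Suc.prems by auto
    have IH: "\<forall>v p. v \<in> fvals t \<longrightarrow> p \<in> spine v \<longrightarrow>
     (\<exists>z. ssub z v \<and> p \<in> spine z \<and> z \<in> fvals b \<union> (\<Union>s\<in>{b..<t}. LV s))"
      using Suc.IH bt tL by simp
    have sub: "(\<Union>s\<in>{b..<t}. LV s) \<subseteq> (\<Union>s\<in>{b..<Suc t}. LV s)" by (auto, metis atLeastLessThan_iff less_Suc_eq)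
    show ?thesis
    proof (intro allI impI)
      fix v p assume v: "v \<in> fvals (Suc t)" and p: "p \<in> spine v"
      from fvals_step[OF tL v] show "\<exists>z. ssub z v \<and> p \<in> spine z \<and> z \<in> fvals b \<union> (\<Union>s\<in>{b..<Suc t}. LV s)"
      proof (elim disjE exE conjE)
        assume "v \<in> fvals t"
        then show ?thesis using IH p sub by blast
      next
        assume "v \<in> LV t"
        then show ?thesis using p bt by (intro exI[of _ v]) (auto intro: ssub.refl)
      next
        fix op vs assume ap: "apply_op op vs = Some v" and vs: "set vs \<subseteq> fvals t"
        have "spine v = \<Union> (spine ` sch v)" using apply_op_sch[OF ap] spine_nonInp by blast
        then obtain c where c: "c \<in> sch v" "p \<in> spine c" using p by auto
        then have "c \<in> fvals t" using apply_op_sch[OF ap] vs by blast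
        then obtain z where "ssub z c" "p \<in> spine z" "z \<in> fvals b \<union> (\<Union>s\<in>{b..<t}. LV s)"
          using IH c by blast
        then show ?thesis using c sub by (intro exI[of _ z]) (auto intro: ssub.step)
      qed
    qed
  qed
qed

lemma slow_written:
  "s0 \<le> e \<Longrightarrow> e \<le> L \<Longrightarrow> z \<in> svals e \<Longrightarrow> z \<notin> svals s0 \<Longrightarrow> z \<in> (\<Union>s\<in>{s0..<e}. SV s)"
proof (induction e)
  case 0 then show ?case by simp
next
  case (Suc e)
  show ?case
  proof (cases "s0 = Suc e")
    case True then show ?thesis using Suc.prems by simp
  next
    case False
    then have "s0 \<le> e" "e < L" using Suc.prems by auto
    then show ?thesis using svals_step[OF \<open>e < L\<close> Suc.prems(3)] Suc.IH Suc.prems by force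
  qed
qed

lemma svals0: "v \<in> svals 0 \<Longrightarrow> \<exists>i j. v = Inp i j"
  by (auto simp: svals_def st_0 init_state_def split: if_splits prod.splits)

lemma fvals0: "fvals 0 = {}"
  by (auto simp: fvals_def st_0 init_state_def)

lemma chain:
  assumes "X \<in> svals L" "ssub (Mul a b) X"
  shows "\<exists>s0<L. a \<in> fvals s0 \<and> b \<in> fvals s0 \<and>
    (\<forall>e. s0 < e \<and> e \<le> L \<longrightarrow> (\<exists>z. ssub (Mul a b) z \<and> ssub z X \<and> z \<in> fvals e \<union> (\<Union>s\<in>{s0..<e}. SV s)))"
proof -
  define P where "P t \<longleftrightarrow> (\<exists>z. ssub (Mul a b) z \<and> ssub z X \<and> (z \<in> fvals t \<or> z \<in> svals t))" for t
  have P0: "\<not> P 0"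
  proof
    assume "P 0"
    then obtain z where z: "ssub (Mul a b) z" "z \<in> svals 0" using fvals0 by (auto simp: P_def)
    then obtain i j where "z = Inp i j" using svals0 by blast
    then show False using z ssub_Inp by fastforce
  qed
  have PL: "P L" using assms by (auto simp: P_def intro: ssub.refl)
  define s0 where "s0 = (GREATEST t. t \<le> L \<and> \<not> P t)"
  have bnd: "\<forall>y. y \<le> L \<and> \<not> P y \<longrightarrow> y \<le> L" by simp
  have s0: "s0 \<le> L \<and> \<not> P s0"
    unfolding s0_def by (rule GreatestI_nat[of _ 0 L]) (use P0 in auto)
  have after: "P e" if "s0 < e" "e \<le> L" for e
  proof (rule ccontr)
    assume "\<not> P e"
    then have "e \<le> s0" unfolding s0_def using that(2) by (intro Greatest_le_nat[of _ e L]) auto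
    then show False using that by simp
  qed
  have s0L: "s0 < L" using s0 PL by (cases "s0 = L") auto
  obtain z where z: "ssub (Mul a b) z" "ssub z X" "z \<in> fvals (Suc s0) \<or> z \<in> svals (Suc s0)"
    using after[of "Suc s0"] s0L by (auto simp: P_def)
  have ab: "a \<in> fvals s0 \<and> b \<in> fvals s0"
  proof (cases "z \<in> svals (Suc s0)")
    case True
    then have "z \<in> svals s0 \<or> z \<in> fvals s0" using svals_step[OF s0L] SV_sub by blast
    then show ?thesis using s0 z by (auto simp: P_def)
  next
    case False
    then have zf: "z \<in> fvals (Suc s0)" using z by blast
    from fvals_step[OF s0L zf] show ?thesis
    proof (elim disjE exE conjE)
      assume "z \<in> fvals s0" then show ?thesis using s0 z by (auto simp: P_def)
    next
      assume "z \<in> LV s0" then show ?thesis using s0 z LV_sub by (auto simp: P_def)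
    next
      fix op vs assume ap: "apply_op op vs = Some z" and vs: "set vs \<subseteq> fvals s0"
      show ?thesis
      proof (cases "z = Mul a b")
        case True
        then have "vs = [a, b]" using apply_op_Mul ap by simp
        then show ?thesis using vs by simp
      next
        case False
        then obtain c where c: "c \<in> sch z" "ssub (Mul a b) c" using ssub_proper z(1) by blast
        then have "c \<in> fvals s0" using apply_op_sch[OF ap] vs by blast
        moreover have "ssub c X" using ssub_child c(1) z(2) by blast
        ultimately have "P s0" using c by (auto simp: P_def)
        then show ?thesis using s0 by simp
      qed
    qed
  qed
  have "\<exists>z. ssub (Mul a b) z \<and> ssub z X \<and> z \<in> fvals e \<union> (\<Union>s\<in>{s0..<e}. SV s)"
    if e: "s0 < e" "e \<le> L" for e
  proof -
    obtain z where z: "ssub (Mul a b) z" "ssub z X" "z \<in> fvals e \<or> z \<in> svals e"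
      using after[OF e] by (auto simp: P_def)
    show ?thesis
    proof (cases "z \<in> fvals e")
      case True then show ?thesis using z by blast
    next
      case False
      then have "z \<in> svals e" using z by blast
      moreover have "z \<notin> svals s0" using s0 z by (auto simp: P_def)
      ultimately have "z \<in> (\<Union>s\<in>{s0..<e}. SV s)" using slow_written e by simp
      then show ?thesis using z by blast
    qed
  qed
  then show ?thesis using s0L ab by blast
qed

end


lemma real_min_bound:
  fixes x d c :: nat
  assumes "x \<le> d * d" "x \<le> c"
  shows "real x \<le> real d * sqrt (real c)"
proof (cases "d * d \<le> c")
  case True
  have "real d = sqrt (real d * real d)" by simp
  also have "\<dots> \<le> sqrt (real c)" using True by (simp add: of_nat_mult[symmetric] del: of_nat_mult)
  finally have "real d * real d \<le> real d * sqrt (real c)" by (simp add: mult_left_mono)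
  then show ?thesis using assms(1) by (metis of_nat_le_iff of_nat_mult order_trans)
next
  case False
  then have "real c < real d * real d" by (simp add: of_nat_mult[symmetric] del: of_nat_mult)
  then have "sqrt (real c) < sqrt (real d * real d)" using real_sqrt_less_mono by blast
  then have "sqrt (real c) < real d" by simp
  then have "sqrt (real c) * sqrt (real c) \<le> real d * sqrt (real c)"
    by (intro mult_right_mono) auto
  then show ?thesis using assms(2) by simp
qed

lemma tri_count:
  fixes A C :: "(nat \<times> nat) set" and T :: "(nat \<times> nat \<times> nat) set"
  assumes fA: "finite A" and fC: "finite C"
    and T: "T \<subseteq> {(i,j,k). (i,k)\<in>A \<and> (j,k)\<in>A \<and> (i,j)\<in>C}"
  shows "real (card T) \<le> real (card A) * sqrt (real (card C))"
proof -
  define K where "K = snd ` A"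
  define F where "F k = {p\<in>A. snd p = k}" for k
  define Tk where "Tk k = {t\<in>T. snd (snd t) = k}" for k
  have fK: "finite K" using fA by (simp add: K_def)
  have fF: "finite (F k)" for k using fA by (simp add: F_def)
  have TU: "T = (\<Union>k\<in>K. Tk k)"
  proof
    show "T \<subseteq> (\<Union>k\<in>K. Tk k)"
    proof
      fix t assume tT: "t \<in> T"
      obtain i j k where t: "t = (i,j,k)" by (metis prod_cases3)
      then have "(i,k) \<in> A" using T tT by auto
      then have "k \<in> K" unfolding K_def by (metis image_eqI snd_conv)
      then show "t \<in> (\<Union>k\<in>K. Tk k)" using tT t by (auto simp: Tk_def)
    qed
  qed (auto simp: Tk_def)
  have fT: "finite (Tk k)" for k
  proof -
    have "Tk k \<subseteq> (\<lambda>(p, q). (fst p, fst q, snd p)) ` (A \<times> A)"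
    proof
      fix t assume "t \<in> Tk k"
      then obtain i j k' where t: "t = (i,j,k')" "(i,j,k') \<in> T" by (auto simp: Tk_def) (metis prod_cases3)
      then have "(i,k') \<in> A" "(j,k') \<in> A" using T by auto
      then show "t \<in> (\<lambda>(p, q). (fst p, fst q, snd p)) ` (A \<times> A)" using t
        by (intro image_eqI[of _ _ "((i,k'),(j,k'))"]) auto
    qed
    then show ?thesis using finite_subset fA by blast
  qed
  have c1: "card (Tk k) \<le> card (F k) * card (F k)" for k
  proof -
    have "inj_on (\<lambda>(i,j,k). ((i,k),(j,k))) (Tk k)" by (auto simp: inj_on_def)
    moreover have "(\<lambda>(i,j,k). ((i,k),(j,k))) ` (Tk k) \<subseteq> F k \<times> F k"
    proof
      fix x assume "x \<in> (\<lambda>(i,j,k). ((i,k),(j,k))) ` (Tk k)"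
      then obtain i j k' where t: "(i,j,k') \<in> Tk k" "x = ((i,k'),(j,k'))" by auto
      then have "(i,j,k') \<in> T" "k' = k" by (auto simp: Tk_def)
      then have "(i,k) \<in> A" "(j,k) \<in> A" using T by auto
      then show "x \<in> F k \<times> F k" using t \<open>k' = k\<close> by (simp add: F_def)
    qed
    ultimately have "card (Tk k) \<le> card (F k \<times> F k)"
      by (rule card_inj_on_le[OF _ _ finite_SigmaI[OF fF fF]])
    then show ?thesis by (simp add: card_cartesian_product)
  qed
  have c2: "card (Tk k) \<le> card C" for k
  proof -
    have "inj_on (\<lambda>(i,j,k). (i,j)) (Tk k)" by (auto simp: inj_on_def Tk_def)
    moreover have "(\<lambda>(i,j,k). (i,j)) ` (Tk k) \<subseteq> C"
    proof
      fix x assume "x \<in> (\<lambda>(i,j,k). (i,j)) ` (Tk k)"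
      then obtain i j k' where t: "(i,j,k') \<in> Tk k" "x = (i,j)" by auto
      then have "(i,j,k') \<in> T" by (auto simp: Tk_def)
      then show "x \<in> C" using T t by auto
    qed
    ultimately show ?thesis by (rule card_inj_on_le[OF _ _ fC])
  qed
  have "card T \<le> (\<Sum>k\<in>K. card (Tk k))" unfolding TU using card_UN_le[OF fK] by blast
  then have "real (card T) \<le> (\<Sum>k\<in>K. real (card (Tk k)))" by (metis of_nat_le_iff of_nat_sum)
  also have "\<dots> \<le> (\<Sum>k\<in>K. real (card (F k)) * sqrt (real (card C)))"
    by (rule sum_mono) (rule real_min_bound[OF c1 c2])
  also have "\<dots> = real (\<Sum>k\<in>K. card (F k)) * sqrt (real (card C))"
    by (simp add: sum_distrib_right)
  also have "(\<Sum>k\<in>K. card (F k)) = card A"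
  proof -
    have "A = (\<Union>k\<in>K. F k)" by (auto simp: K_def F_def)
    moreover have "card (\<Union>k\<in>K. F k) = (\<Sum>k\<in>K. card (F k))"
      by (rule card_UN_disjoint[OF fK]) (auto simp: fF F_def fA)
    ultimately show ?thesis by simp
  qed
  finally show ?thesis .
qed


lemma fold_upd_notin:
  "q \<notin> g ` set xs \<Longrightarrow> fold (\<lambda>k F'. F'(g k := h k)) xs F q = F q"
proof (induction xs arbitrary: F)
  case Nil then show ?case by simp
next
  case (Cons x xs)
  have "fold (\<lambda>k F'. F'(g k := h k)) (x # xs) F q = fold (\<lambda>k F'. F'(g k := h k)) xs (F(g x := h x)) q"
    by simp
  also have "\<dots> = (F(g x := h x)) q" using Cons by (intro Cons.IH) simp
  also have "\<dots> = F q" using Cons.prems by simp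
  finally show ?case .
qed

context cc begin

definition Vset where "Vset b e = fvals b \<union> (\<Union>s\<in>{b..<e}. LV s)"
definition Wset where "Wset b e = fvals e \<union> (\<Union>s\<in>{b..<e}. SV s)"
definition Aset where "Aset b e = {p. \<exists>z\<in>Vset b e. spine z = {p}}"
definition Cset where "Cset b e = {p. \<exists>z\<in>Wset b e. mk z = {p}}"
definition wsum where "wsum b e = (\<Sum>s\<in>{b..<e}. msg_words (prog ! s))"

lemma UN_card_bound:
  assumes "\<And>s. finite (X s) \<and> card (X s) \<le> msg_words (prog ! s)"
  shows "finite (\<Union>s\<in>{b..<e}. X s) \<and> card (\<Union>s\<in>{b..<e}. X s) \<le> wsum b e"
proof -
  have "card (\<Union>s\<in>{b..<e}. X s) \<le> (\<Sum>s\<in>{b..<e}. card (X s))" by (rule card_UN_le) simp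
  also have "\<dots> \<le> wsum b e" unfolding wsum_def by (rule sum_mono) (use assms in blast)
  finally show ?thesis using assms by auto
qed

lemma Vset_card: "b \<le> L \<Longrightarrow> finite (Vset b e) \<and> card (Vset b e) \<le> M + wsum b e"
proof -
  assume b: "b \<le> L"
  have U: "finite (\<Union>s\<in>{b..<e}. LV s) \<and> card (\<Union>s\<in>{b..<e}. LV s) \<le> wsum b e"
    by (rule UN_card_bound) (rule LV_card)
  have "card (Vset b e) \<le> card (fvals b) + card (\<Union>s\<in>{b..<e}. LV s)"
    unfolding Vset_def by (rule card_Un_le)
  then show ?thesis using U fvals_card[OF b] unfolding Vset_def by auto
qed

lemma Wset_card: "e \<le> L \<Longrightarrow> finite (Wset b e) \<and> card (Wset b e) \<le> M + wsum b e"
proof -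
  assume e: "e \<le> L"
  have U: "finite (\<Union>s\<in>{b..<e}. SV s) \<and> card (\<Union>s\<in>{b..<e}. SV s) \<le> wsum b e"
    by (rule UN_card_bound) (rule SV_card)
  have "card (Wset b e) \<le> card (fvals e) + card (\<Union>s\<in>{b..<e}. SV s)"
    unfolding Wset_def by (rule card_Un_le)
  then show ?thesis using U fvals_card[OF e] unfolding Wset_def by auto
qed

lemma image_card_bound:
  assumes "finite V" "card V \<le> K" "P \<subseteq> {p. \<exists>z\<in>V. f z = {p}}"
  shows "finite P \<and> card P \<le> K"
proof -
  have sub: "P \<subseteq> (\<lambda>z. the_elem (f z)) ` V"
  proof
    fix p assume "p \<in> P"
    then obtain z where "z \<in> V" "f z = {p}" using assms(3) by blast
    then show "p \<in> (\<lambda>z. the_elem (f z)) ` V" by (intro image_eqI[of _ _ z]) auto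
  qed
  have fin: "finite ((\<lambda>z. the_elem (f z)) ` V)" using assms(1) by simp
  have "card P \<le> card ((\<lambda>z. the_elem (f z)) ` V)" by (rule card_mono[OF fin sub])
  also have "\<dots> \<le> card V" by (rule card_image_le[OF assms(1)])
  finally show ?thesis using assms(2) finite_subset[OF sub fin] by simp
qed

lemma Aset_card: "b \<le> L \<Longrightarrow> finite (Aset b e) \<and> card (Aset b e) \<le> M + wsum b e"
  using Vset_card image_card_bound[of "Vset b e" "M + wsum b e" "Aset b e" spine]
  unfolding Aset_def by blast

lemma Cset_card: "e \<le> L \<Longrightarrow> finite (Cset b e) \<and> card (Cset b e) \<le> M + wsum b e"
  using Wset_card image_card_bound[of "Wset b e" "M + wsum b e" "Cset b e" mk]
  unfolding Cset_def by blast

lemma triple_assign: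
  assumes cho: "\<forall>i<n. \<forall>j\<le>i. \<exists>q e. snd (st L) q = Some e \<and> chol_entry i j e"
    and ijk: "i < n" "j \<le> i" "k < j"
  shows "\<exists>s0<L. \<forall>b e. b \<le> s0 \<and> s0 < e \<and> e \<le> L \<longrightarrow>
           (i,k) \<in> Aset b e \<and> (j,k) \<in> Aset b e \<and> (i,j) \<in> Cset b e"
proof -
  obtain q X where X: "snd (st L) q = Some X" "chol_entry i j X" using cho ijk by blast
  have XL: "X \<in> svals L" using X by (auto simp: svals_def)
  obtain a b' where ab: "ssub (Mul a b') X" "mk (Mul a b') = {(i,j)}"
    "(spine a = {(i,k)} \<and> spine b' = {(j,k)}) \<or> (spine a = {(j,k)} \<and> spine b' = {(i,k)})"
    using chol_mul[OF X(2) ijk(3)] by blast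
  obtain s0 where s0: "s0 < L" "a \<in> fvals s0" "b' \<in> fvals s0"
    "\<forall>e. s0 < e \<and> e \<le> L \<longrightarrow> (\<exists>z. ssub (Mul a b') z \<and> ssub z X \<and> z \<in> fvals e \<union> (\<Union>s\<in>{s0..<e}. SV s))"
    using chain[OF XL ab(1)] by blast
  have inA: "p \<in> Aset b e" if h: "v \<in> fvals s0" "spine v = {p}" "b \<le> s0" "s0 < e" for v p b e
  proof -
    obtain z where z: "ssub z v" "p \<in> spine z" "z \<in> fvals b \<union> (\<Union>s\<in>{b..<s0}. LV s)"
    proof -
      have "\<forall>v p. v \<in> fvals s0 \<longrightarrow> p \<in> spine v \<longrightarrow>
         (\<exists>z. ssub z v \<and> p \<in> spine z \<and> z \<in> fvals b \<union> (\<Union>s\<in>{b..<s0}. LV s))"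
        using prov_A[of b s0] h(3) s0(1) by simp
      then show ?thesis using h(1,2) that by blast
    qed
    have "spine z = {p}" using ssub_spine[OF z(1)] z(2) h(2) by blast
    moreover have "z \<in> Vset b e" using z(3) h(4) unfolding Vset_def by auto
    ultimately show ?thesis unfolding Aset_def by blast
  qed
  show ?thesis
  proof (intro exI[of _ s0] conjI allI impI s0(1))
    fix b e assume be: "b \<le> s0 \<and> s0 < e \<and> e \<le> L"
    show "(i,k) \<in> Aset b e" "(j,k) \<in> Aset b e"
      using ab(3) inA[OF s0(2) _ _ _] inA[OF s0(3) _ _ _] be by blast+
    obtain z where z: "ssub (Mul a b') z" "ssub z X" "z \<in> fvals e \<union> (\<Union>s\<in>{s0..<e}. SV s)"
      using s0(4) be by blast
    have "mk z = {(i,j)}" using ssub_mk[OF z(1)] ssub_mk[OF z(2)] chol_mk[OF X(2)] ab(2) by blast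
    moreover have "z \<in> Wset b e" using z(3) be unfolding Wset_def by auto
    ultimately show "(i,j) \<in> Cset b e" unfolding Cset_def by blast
  qed
qed

end


context cc begin

definition W where "W s = (\<Sum>t<s. msg_words (prog ! t))"

lemma W_split: "b \<le> e \<Longrightarrow> W e = W b + wsum b e"
proof (induction e rule: dec_induct)
  case base then show ?case by (simp add: wsum_def)
next
  case (step e)
  then show ?case by (simp add: W_def wsum_def)
qed

lemma W_mono: "s \<le> s' \<Longrightarrow> W s \<le> W s'"
  using W_split by fastforce

lemma words_le: "s < L \<Longrightarrow> msg_words (prog ! s) \<le> M"
proof -
  assume "s < L"
  then have "wf_instr M (prog ! s)" using wf by simp
  then show ?thesis by (cases "prog ! s") auto
qed

definition bnd where "bnd g = (LEAST s. s = L \<or> g * M \<le> W s)"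

lemma bnd_le: "bnd g \<le> L"
  unfolding bnd_def by (rule Least_le) simp

lemma bnd_iff: "s < L \<Longrightarrow> bnd g \<le> s \<longleftrightarrow> g * M \<le> W s"
proof
  assume s: "s < L" "bnd g \<le> s"
  have "bnd g = L \<or> g * M \<le> W (bnd g)" unfolding bnd_def by (rule LeastI[of _ L]) simp
  then show "g * M \<le> W s" using s W_mono[OF s(2)] by auto
next
  assume "g * M \<le> W s"
  then show "bnd g \<le> s" unfolding bnd_def by (rule Least_le[of _ s, OF disjI2])
qed

lemma seg_words:
  assumes M: "0 < M"
  shows "wsum (bnd g) (bnd (Suc g)) \<le> 2 * M"
proof (cases "bnd g < bnd (Suc g)")
  case False
  then show ?thesis by (simp add: wsum_def)
next
  case True
  define b e where "b = bnd g" and "e = bnd (Suc g)"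
  have be: "b < e" "e \<le> L" using True bnd_le by (auto simp: b_def e_def)
  have Wb: "g * M \<le> W b" using bnd_iff[of b g] be by (simp add: b_def)
  obtain e' where e': "e = Suc e'" using be by (cases e) auto
  have e'L: "e' < L" using be e' by simp
  have "\<not> bnd (Suc g) \<le> e'" using e' e_def by simp
  then have We': "W e' < Suc g * M" using bnd_iff[OF e'L] by simp
  have "W e = W e' + msg_words (prog ! e')" using W_split[of e' e] e' by (simp add: wsum_def)
  then have "W e < Suc g * M + M" using We' words_le[OF e'L] by simp
  moreover have "W e = W b + wsum b e" using W_split be by simp
  ultimately show ?thesis using Wb by (simp add: b_def e_def)
qed

lemma seg_cover:
  assumes M: "0 < M" and s: "s < L"
  shows "bnd (W s div M) \<le> s \<and> s < bnd (Suc (W s div M))"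
proof -
  have "W s div M * M \<le> W s" by simp
  moreover have "\<not> Suc (W s div M) * M \<le> W s"
    using M by (metis div_less_iff_less_mult lessI not_le)
  ultimately have a: "bnd (W s div M) \<le> s" and b: "\<not> bnd (Suc (W s div M)) \<le> s"
    using bnd_iff[OF s] by simp_all
  then show ?thesis by simp
qed

definition Tri where "Tri = {(i,j,k). i < n \<and> j \<le> i \<and> k < j}"

lemma Tri_finite: "finite Tri"
proof -
  have "Tri \<subseteq> {..<n} \<times> {..<n} \<times> {..<n}" by (auto simp: Tri_def)
  then show ?thesis by (rule finite_subset) simp
qed

lemma main_count:
  assumes M: "0 < M"
    and cho: "\<forall>i<n. \<forall>j\<le>i. \<exists>q e. snd (st L) q = Some e \<and> chol_entry i j e"
  shows "real (card Tri) \<le> real (Suc (W L div M)) * (3 * real M * sqrt (3 * real M))"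
proof -
  define Q where "Q t s0 \<longleftrightarrow> s0 < L \<and> (\<forall>b e. b \<le> s0 \<and> s0 < e \<and> e \<le> L \<longrightarrow>
     (fst t, snd (snd t)) \<in> Aset b e \<and> (fst (snd t), snd (snd t)) \<in> Aset b e \<and>
     (fst t, fst (snd t)) \<in> Cset b e)" for t s0
  define f where "f t = (SOME s0. Q t s0)" for t
  have Qf: "Q t (f t)" if "t \<in> Tri" for t
  proof -
    obtain i j k where t0: "t = (i,j,k)" by (cases t)
    then have t: "t = (i,j,k)" "i < n" "j \<le> i" "k < j" using that by (auto simp: Tri_def)
    have "\<exists>s0. Q t s0" using triple_assign[OF cho t(2-4)] t(1) by (simp add: Q_def)
    then show ?thesis unfolding f_def by (rule someI_ex)
  qed
  define G where "G = W L div M"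
  define T where "T g = {t\<in>Tri. bnd g \<le> f t \<and> f t < bnd (Suc g)}" for g
  have TU: "Tri = (\<Union>g\<in>{..G}. T g)"
  proof
    show "Tri \<subseteq> (\<Union>g\<in>{..G}. T g)"
    proof
      fix t assume t: "t \<in> Tri"
      then have fL: "f t < L" using Qf[OF t] by (simp add: Q_def)
      have "W (f t) div M \<le> G" unfolding G_def using W_mono[of "f t" L] fL by (simp add: div_le_mono)
      then show "t \<in> (\<Union>g\<in>{..G}. T g)" using seg_cover[OF M fL] t by (auto simp: T_def)
    qed
  qed (auto simp: T_def)
  have Tg: "real (card (T g)) \<le> 3 * real M * sqrt (3 * real M)" for g
  proof -
    define b e where "b = bnd g" and "e = bnd (Suc g)"
    have eL: "e \<le> L" "b \<le> L" using bnd_le by (auto simp: b_def e_def)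
    have ws: "wsum b e \<le> 2 * M" using seg_words[OF M] by (simp add: b_def e_def)
    have cA: "finite (Aset b e)" "card (Aset b e) \<le> 3 * M" using Aset_card[OF eL(2), of e] ws by auto
    have cC: "finite (Cset b e)" "card (Cset b e) \<le> 3 * M" using Cset_card[OF eL(1), of b] ws by auto
    have sub: "T g \<subseteq> {(i,j,k). (i,k)\<in>Aset b e \<and> (j,k)\<in>Aset b e \<and> (i,j)\<in>Cset b e}"
    proof
      fix t assume t: "t \<in> T g"
      then have "t \<in> Tri" "b \<le> f t" "f t < e" by (auto simp: T_def b_def e_def)
      then have "(fst t, snd (snd t)) \<in> Aset b e \<and> (fst (snd t), snd (snd t)) \<in> Aset b e \<and>
         (fst t, fst (snd t)) \<in> Cset b e" using Qf eL unfolding Q_def by blast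
      then show "t \<in> {(i,j,k). (i,k)\<in>Aset b e \<and> (j,k)\<in>Aset b e \<and> (i,j)\<in>Cset b e}"
        by (cases t) auto
    qed
    have "real (card (T g)) \<le> real (card (Aset b e)) * sqrt (real (card (Cset b e)))"
      by (rule tri_count[OF cA(1) cC(1) sub])
    also have "\<dots> \<le> real (3 * M) * sqrt (real (3 * M))"
      using cA(2) cC(2) by (intro mult_mono) auto
    finally show ?thesis by simp
  qed
  have "card Tri \<le> (\<Sum>g\<in>{..G}. card (T g))" unfolding TU by (rule card_UN_le) simp
  then have "real (card Tri) \<le> (\<Sum>g\<in>{..G}. real (card (T g)))" by (metis of_nat_le_iff of_nat_sum)
  also have "\<dots> \<le> (\<Sum>g\<in>{..G}. 3 * real M * sqrt (3 * real M))" by (rule sum_mono) (rule Tg)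
  also have "\<dots> = real (Suc G) * (3 * real M * sqrt (3 * real M))" by simp
  finally show ?thesis by (simp add: G_def)
qed

end


lemma lat_bound: "\<forall>ins\<in>set p. wf_instr M ins \<Longrightarrow> sum_list (map msg_words p) \<le> M * length (filter is_msg p)"
proof (induction p)
  case Nil then show ?case by simp
next
  case (Cons a p)
  then show ?case by (cases a) auto
qed

lemma gauss2: "2 * (\<Sum>j\<le>i. j) = i * (Suc i :: nat)"
  by (induction i) auto

lemma tri_sum: "6 * real (\<Sum>i<n. \<Sum>j\<le>i. (j::nat)) = real n ^ 3 - real n"
proof (induction n)
  case 0 then show ?case by simp
next
  case (Suc n)
  have g: "2 * real (\<Sum>j\<le>n. j) = real n * (real n + 1)"
    using gauss2[of n] by (metis of_nat_Suc of_nat_mult of_nat_numeral add.commute)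
  have "6 * real (\<Sum>i<Suc n. \<Sum>j\<le>i. j) = 6 * real (\<Sum>i<n. \<Sum>j\<le>i. j) + 3 * (2 * real (\<Sum>j\<le>n. j))"
    by simp
  also have "\<dots> = real n ^ 3 - real n + 3 * (real n * (real n + 1))" using Suc g by simp
  also have "\<dots> = real (Suc n) ^ 3 - real (Suc n)" by (simp add: power3_eq_cube algebra_simps)
  finally show ?case .
qed

lemma pair_sum: "2 * (\<Sum>i<n. Suc i) = n * Suc n"
  by (induction n) auto

context cc begin

definition SA where "SA s = (case prog ! s of Store a ss \<Rightarrow> (\<lambda>k. a + k) ` {..<length ss} | _ \<Rightarrow> {})"

lemma SA_card: "finite (SA s) \<and> card (SA s) \<le> msg_words (prog ! s)"
proof (cases "prog ! s")
  case (Store a ss)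
  then show ?thesis using card_image_le[of "{..<length ss}" "\<lambda>k. a + k"] by (simp add: SA_def)
qed (auto simp: SA_def)

lemma slow_changed: "e \<le> L \<Longrightarrow> snd (st e) q \<noteq> snd (st 0) q \<Longrightarrow> q \<in> (\<Union>s\<in>{0..<e}. SA s)"
proof (induction e)
  case 0 then show ?case by simp
next
  case (Suc e)
  then have eL: "e < L" by simp
  show ?case
  proof (cases "snd (st (Suc e)) q = snd (st e) q")
    case True
    then have "snd (st e) q \<noteq> snd (st 0) q" using Suc.prems by simp
    then have "q \<in> (\<Union>s\<in>{0..<e}. SA s)" using Suc.IH eL by simp
    then show ?thesis by auto
  next
    case False
    obtain F S where FS: "st e = (F, S)" by fastforce
    show ?thesis
    proof (cases "prog ! e")
      case (Store a ss)
      have eq: "snd (st (Suc e)) q = fold (\<lambda>k S'. S'(a + k := F (ss ! k))) [0..<length ss] S q"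
        using st_Suc[OF eL] FS Store by simp
      have "q \<in> (\<lambda>k. a + k) ` set [0..<length ss]"
      proof (rule ccontr)
        assume "q \<notin> (\<lambda>k. a + k) ` set [0..<length ss]"
        then have "snd (st (Suc e)) q = S q"
          using eq fold_upd_notin[of q "\<lambda>k. a + k" "[0..<length ss]" "\<lambda>k. F (ss ! k)" S] by simp
        then show False using False FS by simp
      qed
      then obtain k where k0: "k \<in> set [0..<length ss]" "q = a + k" by (rule imageE)
      then have k: "k < length ss" "q = a + k" by simp_all
      then have "q \<in> (\<lambda>k. a + k) ` {..<length ss}" by blast
      then have "q \<in> SA e" using Store by (simp add: SA_def)
      then show ?thesis by auto
    next
      case (Load a ds)
      then show ?thesis using False st_Suc[OF eL] FS by simp
    next
      case (Arith op d args)
      then show ?thesis using False st_Suc[OF eL] FS by simp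
    qed
  qed
qed

lemma W_L: "W L = bandwidth prog"
proof -
  have "bandwidth prog = (\<Sum>i = 0..<length (map msg_words prog). map msg_words prog ! i)"
    unfolding bandwidth_def by (rule sum_list_sum_nth)
  also have "\<dots> = (\<Sum>i<L. msg_words (prog ! i))"
    by (simp add: atLeast0LessThan)
  finally show ?thesis by (simp add: W_def)
qed

lemma out_count:
  assumes cho: "\<forall>i<n. \<forall>j\<le>i. \<exists>q e. snd (st L) q = Some e \<and> chol_entry i j e"
  shows "card {(i,j). i < n \<and> j \<le> i} \<le> W L"
proof -
  define Pr where "Pr = {(i::nat,j::nat). i < n \<and> j \<le> i}"
  define qf where "qf p = (SOME q. \<exists>e. snd (st L) q = Some e \<and> chol_entry (fst p) (snd p) e)" for p
  have qf: "\<exists>e. snd (st L) (qf p) = Some e \<and> chol_entry (fst p) (snd p) e" if "p \<in> Pr" for p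
  proof -
    obtain i j where p: "p = (i,j)" by (cases p)
    then have "i < n" "j \<le> i" using that by (auto simp: Pr_def)
    then have "\<exists>q e. snd (st L) q = Some e \<and> chol_entry i j e" using cho by blast
    then have "\<exists>q e. snd (st L) q = Some e \<and> chol_entry (fst p) (snd p) e" using p by simp
    then show ?thesis unfolding qf_def by (rule someI_ex)
  qed
  have inj: "inj_on qf Pr"
  proof (rule inj_onI)
    fix p1 p2 assume p: "p1 \<in> Pr" "p2 \<in> Pr" "qf p1 = qf p2"
    obtain e1 where e1: "snd (st L) (qf p1) = Some e1" "chol_entry (fst p1) (snd p1) e1" using qf p(1) by blast
    obtain e2 where e2: "snd (st L) (qf p2) = Some e2" "chol_entry (fst p2) (snd p2) e2" using qf p(2) by blast
    have "e1 = e2" using e1 e2 p(3) by simp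
    have "spine e1 = {(fst p1, snd p1)}" by (rule chol_spine[OF e1(2)])
    moreover have "spine e1 = {(fst p2, snd p2)}" using \<open>e1 = e2\<close> chol_spine[OF e2(2)] by simp
    ultimately show "p1 = p2" by (simp add: prod_eq_iff)
  qed
  have sub: "qf ` Pr \<subseteq> (\<Union>s\<in>{0..<L}. SA s)"
  proof
    fix q assume "q \<in> qf ` Pr"
    then obtain p where p: "p \<in> Pr" "q = qf p" by blast
    obtain e where e: "snd (st L) q = Some e" "chol_entry (fst p) (snd p) e" using qf p by blast
    have "snd (st 0) q \<noteq> Some e"
    proof
      assume "snd (st 0) q = Some e"
      then have "e \<in> svals 0" by (auto simp: svals_def)
      then show False using svals0 chol_not_Inp e(2) by blast
    qed
    then have "snd (st L) q \<noteq> snd (st 0) q" using e(1) by simp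
    then show "q \<in> (\<Union>s\<in>{0..<L}. SA s)" by (rule slow_changed[OF le_refl])
  qed
  have U: "finite (\<Union>s\<in>{0..<L}. SA s) \<and> card (\<Union>s\<in>{0..<L}. SA s) \<le> wsum 0 L"
    by (rule UN_card_bound) (rule SA_card)
  then have fin: "finite (\<Union>s\<in>{0..<L}. SA s)" by simp
  have "card Pr = card (qf ` Pr)" using card_image[OF inj] by simp
  also have "\<dots> \<le> card (\<Union>s\<in>{0..<L}. SA s)" by (rule card_mono[OF fin sub])
  also have "\<dots> \<le> wsum 0 L" using U by simp
  also have "\<dots> = W L" using W_split[of 0 L] by (simp add: W_def)
  finally show ?thesis by (simp add: Pr_def)
qed

end

lemma Pr_card: "2 * card {(i::nat,j::nat). i < n \<and> j \<le> i} = n * Suc n"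
proof -
  have "{(i::nat,j::nat). i < n \<and> j \<le> i} = Sigma {..<n} (\<lambda>i. {..i})" by auto
  then have "card {(i::nat,j::nat). i < n \<and> j \<le> i} = (\<Sum>i<n. Suc i)" by (simp add: card_SigmaI)
  then show ?thesis using pair_sum by simp
qed

lemma Tri_card: "6 * real (card {(i::nat,j::nat,k::nat). i < n \<and> j \<le> i \<and> k < j}) = real n ^ 3 - real n"
proof -
  have "{(i::nat,j::nat,k::nat). i < n \<and> j \<le> i \<and> k < j} = Sigma {..<n} (\<lambda>i. Sigma {..i} (\<lambda>j. {..<j}))" by auto
  then have "card {(i::nat,j::nat,k::nat). i < n \<and> j \<le> i \<and> k < j} = (\<Sum>i<n. \<Sum>j\<le>i. j)"
    by (simp add: card_SigmaI)
  then show ?thesis using tri_sum by simp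
qed


lemma final_arith:
  fixes n M B Lat :: nat
  assumes M0: "0 < M" and Mn: "M < n^2"
    and h1: "real n ^ 3 - real n \<le> 6 * (real (Suc (B div M)) * (3 * real M * sqrt (3 * real M)))"
    and h2: "n * Suc n \<le> 2 * B"
    and h3: "B \<le> M * Lat"
  shows "1/144 * real n ^ 3 / sqrt (real M) \<le> real B \<and>
         1/144 * real n ^ 3 / (real M powr (3/2)) \<le> real Lat"
proof -
  define s where "s = sqrt (real M)"
  have s0: "0 < s" using M0 by (simp add: s_def)
  have sM: "s * s = real M" using M0 by (simp add: s_def)
  have n2: "2 \<le> n"
  proof (rule ccontr)
    assume "\<not> 2 \<le> n"
    then have "n \<le> 1" by simp
    then have "n = 0 \<or> n = 1" by auto
    then have "n^2 \<le> 1" by auto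
    then show False using M0 Mn by simp
  qed
  have rn2: "2 \<le> real n" using n2 by simp
  have D: "real (Suc (B div M)) \<le> real B / real M + 1"
    using of_nat_div_le_of_nat[of B M] by simp
  have sq3: "sqrt (3 * real M) \<le> 2 * s"
  proof -
    have "sqrt (3 * real M) = sqrt 3 * s" by (simp add: s_def real_sqrt_mult)
    moreover have "sqrt 3 \<le> (2::real)" by (rule real_le_lsqrt) auto
    ultimately show ?thesis using s0 by simp
  qed
  have K: "3 * real M * sqrt (3 * real M) \<le> 6 * (s * s * s)"
  proof -
    have "3 * real M * sqrt (3 * real M) \<le> 3 * real M * (2 * s)"
      using sq3 by (intro mult_left_mono) auto
    then show ?thesis using sM by (simp add: algebra_simps)
  qed
  have Kn: "0 \<le> 3 * real M * sqrt (3 * real M)" by simp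
  have "real (Suc (B div M)) * (3 * real M * sqrt (3 * real M)) \<le> (real B / real M + 1) * (6 * (s * s * s))"
    by (rule mult_mono[OF D K]) (use s0 Kn in auto)
  also have "\<dots> = 6 * (real B * s) + 6 * (s * s * s)"
    using sM s0 M0 by (simp add: field_simps)
  finally have h1': "real n ^ 3 - real n \<le> 36 * (real B * s) + 36 * (s * s * s)" using h1 by simp
  have "4 * real n \<le> real n ^ 3"
  proof -
    have "4 * real n \<le> real n * real n * real n"
      using rn2 by (metis mult_right_mono mult_mono' of_nat_0_le_iff mult_2_right numeral_Bit0 power2_eq_square
          mult.commute order_trans le_add1 zero_le_numeral power2_nat_le_imp_le)
    then show ?thesis by (simp add: power3_eq_cube)
  qed
  then have X: "real n ^ 3 \<le> 48 * (real B * s) + 48 * (s * s * s)" using h1' by linarith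
  have Bb: "real n ^ 3 \<le> 144 * (real B * s)"
  proof (cases "6 * s \<le> real n")
    case True
    have "(6 * s) ^ 3 \<le> real n ^ 3" using True s0 by (intro power_mono) auto
    then have "216 * (s * s * s) \<le> real n ^ 3" by (simp add: power3_eq_cube algebra_simps)
    moreover have "0 \<le> real B * s" using s0 by simp
    ultimately show ?thesis using X by linarith
  next
    case False
    have nn: "real n * real n \<le> 2 * real B"
    proof -
      have "real n * real n \<le> real n * (real n + 1)" by (intro mult_left_mono) auto
      also have "\<dots> \<le> 2 * real B" using h2 by (metis of_nat_Suc of_nat_le_iff of_nat_mult of_nat_numeral add.commute)
      finally show ?thesis .
    qed
    have "real n ^ 3 = (real n * real n) * real n" by (simp add: power3_eq_cube)
    also have "\<dots> \<le> (2 * real B) * (6 * s)" by (rule mult_mono[OF nn]) (use False s0 in auto)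
    also have "\<dots> \<le> 144 * (real B * s)" using s0 by simp
    finally show ?thesis .
  qed
  have B1: "1/144 * real n ^ 3 / s \<le> real B"
    using Bb s0 by (simp add: divide_le_eq algebra_simps)
  have pw: "real M powr (3/2) = real M * s"
  proof -
    have "real M powr (3/2) = real M powr (1 + 1/2)" by simp
    also have "\<dots> = real M powr 1 * real M powr (1/2)" by (rule powr_add)
    also have "\<dots> = real M * s" using M0 by (simp add: s_def powr_half_sqrt)
    finally show ?thesis .
  qed
  have "real B \<le> real M * real Lat" using h3 by (metis of_nat_le_iff of_nat_mult)
  then have BL: "real B / real M \<le> real Lat" using M0 by (simp add: divide_le_eq mult.commute)
  have L1: "1/144 * real n ^ 3 / (real M powr (3/2)) \<le> real Lat"
  proof -
    have "1/144 * real n ^ 3 / (real M powr (3/2)) = (1/144 * real n ^ 3 / s) / real M"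
      unfolding pw by (simp add: divide_divide_eq_left mult.commute)
    also have "\<dots> \<le> real B / real M"
      using divide_right_mono[OF B1, of "real M"] M0 by simp
    also have "\<dots> \<le> real Lat" by (rule BL)
    finally show ?thesis .
  qed
  show ?thesis using B1 L1 unfolding s_def by simp
qed


theorem corollary2p5:
  shows "\<exists>c>0. \<forall>n M pos prog.
           0 < M \<and> M < n\<^sup>2 \<and> valid_layout n pos \<and> classical_cholesky n M pos prog \<longrightarrow>
             real (bandwidth prog) \<ge> c * real n ^ 3 / sqrt (real M) \<and>
             real (latency prog) \<ge> c * real n ^ 3 / (real M powr (3/2))"
proof -
  have main: "real (bandwidth prog) \<ge> 1/144 * real n ^ 3 / sqrt (real M) \<and>
             real (latency prog) \<ge> 1/144 * real n ^ 3 / (real M powr (3/2))"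
    if H: "0 < M \<and> M < n\<^sup>2 \<and> valid_layout n pos \<and> classical_cholesky n M pos prog"
    for n M :: nat and pos prog
  proof -
    have wf: "\<forall>ins\<in>set prog. wf_instr M ins"
      and cho0: "\<forall>i<n. \<forall>j\<le>i. \<exists>q e. snd (run prog (init_state n pos)) q = Some e \<and> chol_entry i j e"
      using H by (auto simp: classical_cholesky_def)
    interpret cc n M pos prog by unfold_locales (rule wf)
    have cho: "\<forall>i<n. \<forall>j\<le>i. \<exists>q e. snd (st L) q = Some e \<and> chol_entry i j e"
      using cho0 st_L by simp
    have M0: "0 < M" and Mn: "M < n^2" using H by auto
    have "real n ^ 3 - real n = 6 * real (card Tri)" using Tri_card[of n] by (simp add: Tri_def)
    also have "\<dots> \<le> 6 * (real (Suc (W L div M)) * (3 * real M * sqrt (3 * real M)))"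
      using main_count[OF M0 cho] by linarith
    finally have h1: "real n ^ 3 - real n \<le> 6 * (real (Suc (bandwidth prog div M)) * (3 * real M * sqrt (3 * real M)))"
      using W_L by simp
    have h2: "n * Suc n \<le> 2 * bandwidth prog"
      using Pr_card[of n] out_count[OF cho] W_L by simp
    have h3: "bandwidth prog \<le> M * latency prog"
      using lat_bound[OF wf] by (simp add: bandwidth_def latency_def)
    show ?thesis using final_arith[OF M0 Mn h1 h2 h3] by simp
  qed
  show ?thesis
    by (rule exI[of _ "1/144"], rule conjI) (simp, use main in blast)
qed


end
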